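(* Let $(p_n)_{n\ge1}$ be nonnegative reals with $\sum_{n\ge1}p_n=1$ and let $g(r)=\sum_{n\ge1}p_nr^n$ for $r\in[-1,1]$. Let $R=(r_{ij})_{1\le i,j\le d}$ be a real symmetric positive semi-definite $d\times d$ matrix with unit diagonal. Let $(\epsilon_n)_{n\ge1}$ be any sequence with $\epsilon_n\in\{-1,1\}$, and define $f(x)=\sum_{n\ge1}\epsilon_n\sqrt{p_n}\frac{H_n(x)}{\sqrt{n!}}$, where $(H_n)$ are the Hermite polynomials defined by $e^{xt-t^2/2}=\sum_{n\ge0}H_n(x)\frac{t^n}{n!}$ (the series converging in $L^2$ of the standard normal distribution). Let $(X_1,\dots,X_d)$ be centered Gaussian with covariance matrix $R$. Then the matrix $R^*=(g(r_{ij}))_{1\le i,j\le d}$ is both the covariance matrix and the correlation matrix of $(f(X_1),\dots,f(X_d))$. *)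

theory Defs
  imports "HOL-Probability.Probability"
begin

text \<open>Hermite polynomials via the generating function
  exp(x t - t^2/2) = sum_n H_n(x) t^n / n!, i.e. H_n(x) is the n-th derivative
  in t of exp(x t - t^2/2) at t = 0.\<close>
definition hermite :: "nat \<Rightarrow> real \<Rightarrow> real" where
  "hermite n x = (deriv ^^ n) (\<lambda>t. exp (x * t - t\<^sup>2 / 2)) 0"

definition covariance :: "'a measure \<Rightarrow> ('a \<Rightarrow> real) \<Rightarrow> ('a \<Rightarrow> real) \<Rightarrow> real" where
  "covariance M U V =
     (\<integral>\<omega>. (U \<omega> - (\<integral>\<omega>'. U \<omega>' \<partial>M)) * (V \<omega> - (\<integral>\<omega>'. V \<omega>' \<partial>M)) \<partial>M)"

definition correlation :: "'a measure \<Rightarrow> ('a \<Rightarrow> real) \<Rightarrow> ('a \<Rightarrow> real) \<Rightarrow> real" where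
  "correlation M U V = covariance M U V / sqrt (covariance M U U * covariance M V V)"

text \<open>(X_1,...,X_d) is a centered Gaussian vector with covariance matrix R
  (entries indexed by 1..d), characterised by its characteristic function
  E[exp(i <t,X>)] = exp(-t^T R t / 2); this covers degenerate R.\<close>
definition centered_gaussian_vector ::
  "'a measure \<Rightarrow> nat \<Rightarrow> (nat \<Rightarrow> 'a \<Rightarrow> real) \<Rightarrow> (nat \<Rightarrow> nat \<Rightarrow> real) \<Rightarrow> bool" where
  "centered_gaussian_vector M d X R \<longleftrightarrow>
     prob_space M \<and>
     (\<forall>i\<in>{1..d}. X i \<in> borel_measurable M) \<and>
     (\<forall>t :: nat \<Rightarrow> real.
        (CLINT \<omega>|M. cis (\<Sum>j\<in>{1..d}. t j * X j \<omega>)) =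
        complex_of_real (exp (- (\<Sum>i\<in>{1..d}. \<Sum>j\<in>{1..d}. t i * t j * R i j) / 2)))"

end

theory Submission
  imports Defs "HOL-Computational_Algebra.Polynomial" "HOL-Computational_Algebra.Formal_Power_Series"
begin



fun Hv :: "real \<Rightarrow> nat \<Rightarrow> real poly" where
  "Hv v 0 = 1"
| "Hv v (Suc 0) = [:0, 1:]"
| "Hv v (Suc (Suc n)) = [:0, 1:] * Hv v (Suc n) - smult (v * of_nat (Suc n)) (Hv v n)"

lemma smult_aux: "p + smult (of_nat (Suc (Suc n))) p = smult (of_nat (Suc (Suc (Suc n)))) (p::real poly)"
proof -
  have "smult (of_nat (Suc k)) p = p + smult (of_nat k) p" for k
    by (simp add: of_nat_Suc smult_add_left)
  from this[of "Suc (Suc n)"] show ?thesis by (rule sym)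
qed

lemma pderiv_Hv_aux:
  "pderiv (Hv v (Suc n)) = smult (of_nat (Suc n)) (Hv v n) \<and>
   pderiv (Hv v (Suc (Suc n))) = smult (of_nat (Suc (Suc n))) (Hv v (Suc n))"
proof (induction n)
  case 0
  show ?case by (simp add: pderiv_mult pderiv_pCons pderiv_smult pderiv_diff algebra_simps)
next
  case (Suc n)
  then have IH: "pderiv (Hv v (Suc (Suc n))) = smult (of_nat (Suc (Suc n))) (Hv v (Suc n))" by blast
  have "pderiv (Hv v (Suc (Suc (Suc n)))) =
      Hv v (Suc (Suc n)) + [:0,1:] * pderiv (Hv v (Suc (Suc n))) - smult (v * of_nat (Suc (Suc n))) (pderiv (Hv v (Suc n)))"
    by (simp only: Hv.simps pderiv_diff pderiv_mult pderiv_smult) (simp add: pderiv_pCons algebra_simps)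
  also have "\<dots> = Hv v (Suc (Suc n)) + smult (of_nat (Suc (Suc n))) ([:0,1:] * Hv v (Suc n) - smult (v * of_nat (Suc n)) (Hv v n))"
    using IH Suc by (simp add: algebra_simps smult_diff_right)
  also have "\<dots> = Hv v (Suc (Suc n)) + smult (of_nat (Suc (Suc n))) (Hv v (Suc (Suc n)))"
    by (simp only: Hv.simps(3))
  also have "\<dots> = smult (of_nat (Suc (Suc (Suc n)))) (Hv v (Suc (Suc n)))"
    using smult_aux by blast
  finally show ?case using IH by blast
qed

lemma pderiv_Hv: "pderiv (Hv v (Suc n)) = smult (of_nat (Suc n)) (Hv v n)"
  using pderiv_Hv_aux by blast

lemma Hv_Suc: "Hv v (Suc n) = [:0,1:] * Hv v n - smult v (pderiv (Hv v n))"
  by (cases n) (simp_all add: pderiv_Hv)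

lemma poly_Hv_Suc: "poly (Hv v (Suc n)) y = y * poly (Hv v n) y - v * poly (pderiv (Hv v n)) y"
  by (subst Hv_Suc) simp

lemma hermite_Hv: "hermite n x = poly (Hv 1 n) x"
proof -
  have "(deriv ^^ n) (\<lambda>t. exp (x * t - t\<^sup>2 / 2)) = (\<lambda>t. poly (Hv 1 n) (x - t) * exp (x * t - t\<^sup>2 / 2))"
  proof (induction n)
    case 0 then show ?case by simp
  next
    case (Suc n)
    have deq: "deriv (\<lambda>t. poly (Hv 1 n) (x - t) * exp (x * t - t\<^sup>2 / 2)) t =
          poly (Hv 1 (Suc n)) (x - t) * exp (x * t - t\<^sup>2 / 2)" for t
    proof (rule DERIV_imp_deriv)
      show "((\<lambda>t. poly (Hv 1 n) (x - t) * exp (x * t - t\<^sup>2 / 2)) has_real_derivative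
          poly (Hv 1 (Suc n)) (x - t) * exp (x * t - t\<^sup>2 / 2)) (at t)"
        unfolding poly_Hv_Suc
        by (auto intro!: derivative_eq_intros DERIV_chain2[OF poly_DERIV] simp: algebra_simps)
    qed
    have "(deriv ^^ Suc n) (\<lambda>t. exp (x * t - t\<^sup>2 / 2)) = deriv (\<lambda>t. poly (Hv 1 n) (x - t) * exp (x * t - t\<^sup>2 / 2))"
      by (simp only: funpow.simps comp_apply Suc.IH)
    then show ?case using deq by (simp add: fun_eq_iff)
  qed
  then show ?thesis by (simp add: hermite_def)
qed

lemma fps_ode:
  fixes A :: "nat \<Rightarrow> real"
  assumes A1: "A 1 = a * A 0"
    and A2: "\<And>n. A (Suc (Suc n)) = a * A (Suc n) - b * of_nat (Suc n) * A n"
  shows "fps_deriv (Abs_fps (\<lambda>n. A n / fact n)) =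
         (fps_const a - fps_const b * fps_X) * Abs_fps (\<lambda>n. A n / fact n)"
proof (rule fps_ext)
  fix n
  show "fps_nth (fps_deriv (Abs_fps (\<lambda>n. A n / fact n))) n =
        fps_nth ((fps_const a - fps_const b * fps_X) * Abs_fps (\<lambda>n. A n / fact n)) n"
  proof (cases n)
    case 0 then show ?thesis using A1 by (simp add: algebra_simps fps_X_mult_nth)
  next
    case (Suc m)
    have "fact (Suc (Suc m)) = (of_nat (Suc (Suc m)) :: real) * fact (Suc m)" by simp
    moreover have "fact (Suc m) = (of_nat (Suc m) :: real) * fact m" by simp
    ultimately show ?thesis using Suc A2[of m]
      by (simp add: algebra_simps fps_X_mult_nth field_simps del: of_nat_Suc fact_Suc)
  qed
qed

lemma fps_ode_unique:
  fixes F G C :: "real fps"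
  assumes "fps_deriv F = C * F" "fps_deriv G = C * G" "fps_nth F 0 = fps_nth G 0"
  shows "F = G"
proof -
  define D where "D = F - G"
  have dD: "fps_deriv D = C * D" using assms by (simp add: D_def algebra_simps)
  have D0: "fps_nth D 0 = 0" using assms by (simp add: D_def)
  have "fps_nth D n = 0" for n
  proof (induction n rule: less_induct)
    case (less n)
    show ?case
    proof (cases n)
      case 0 then show ?thesis using D0 by simp
    next
      case (Suc m)
      have "fps_nth (fps_deriv D) m = fps_nth (C * D) m" using dD by simp
      also have "\<dots> = (\<Sum>i=0..m. fps_nth C i * fps_nth D (m - i))" by (rule fps_mult_nth)
      also have "\<dots> = 0" using less Suc by (intro sum.neutral) auto
      finally have "of_nat (Suc m) * fps_nth D (Suc m) = 0" by simp
      then show ?thesis using Suc by simp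
    qed
  qed
  then show ?thesis by (simp add: D_def fps_eq_iff)
qed

lemma Hv_add:
  fixes u x y :: real
  shows "poly (Hv (1 + u\<^sup>2) n) (x + u * y) =
         (\<Sum>i\<le>n. of_nat (n choose i) * u ^ i * poly (Hv 1 i) y * poly (Hv 1 (n - i)) x)"
proof -
  define E where "E v z = Abs_fps (\<lambda>n. poly (Hv v n) z / fact n)" for v z
  define Es where "Es = Abs_fps (\<lambda>n. u ^ n * poly (Hv 1 n) y / fact n)"
  have dE: "fps_deriv (E v z) = (fps_const z - fps_const v * fps_X) * E v z" for v z
    unfolding E_def by (rule fps_ode) (simp_all add: algebra_simps)
  have dEs: "fps_deriv Es = (fps_const (u * y) - fps_const (u\<^sup>2) * fps_X) * Es"
    unfolding Es_def by (rule fps_ode) (simp_all add: algebra_simps power2_eq_square)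
  have C: "(fps_const (u * y) - fps_const (u\<^sup>2) * fps_X) + (fps_const x - fps_const 1 * fps_X)
        = fps_const (x + u * y) - fps_const (1 + u\<^sup>2) * fps_X"
    by (simp add: fps_const_add algebra_simps)
  have dP: "fps_deriv (Es * E 1 x) = (fps_const (x + u * y) - fps_const (1 + u\<^sup>2) * fps_X) * (Es * E 1 x)"
    unfolding fps_deriv_mult dE dEs C[symmetric] by (simp add: algebra_simps fps_const_add[symmetric] del: fps_const_add)
  have eq: "Es * E 1 x = E (1 + u\<^sup>2) (x + u * y)"
    by (rule fps_ode_unique[OF dP dE]) (simp add: E_def Es_def)
  have "fps_nth (Es * E 1 x) n = (\<Sum>i=0..n. u ^ i * poly (Hv 1 i) y / fact i * (poly (Hv 1 (n - i)) x / fact (n - i)))"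
    by (simp add: fps_mult_nth Es_def E_def)
  then have "poly (Hv (1 + u\<^sup>2) n) (x + u * y) / fact n =
      (\<Sum>i\<le>n. u ^ i * poly (Hv 1 i) y / fact i * (poly (Hv 1 (n - i)) x / fact (n - i)))"
    using eq by (simp add: E_def atLeast0AtMost)
  then have "poly (Hv (1 + u\<^sup>2) n) (x + u * y) =
      fact n * (\<Sum>i\<le>n. u ^ i * poly (Hv 1 i) y / fact i * (poly (Hv 1 (n - i)) x / fact (n - i)))"
    by (simp add: field_simps)
  also have "\<dots> = (\<Sum>i\<le>n. of_nat (n choose i) * u ^ i * poly (Hv 1 i) y * poly (Hv 1 (n - i)) x)"
    unfolding sum_distrib_left
    by (intro sum.cong refl) (simp add: binomial_fact field_simps)
  finally show ?thesis .
qed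




abbreviation "NN \<equiv> std_normal_distribution"

lemma prob_NN: "prob_space NN"
  using real_dist_normal_dist real_distribution_def by blast

lemma integrable_NN_poly: fixes q :: "real poly" shows "integrable NN (\<lambda>x. poly q x)"
  unfolding poly_altdef
  by (intro Bochner_Integration.integrable_sum integrable_mult_right integrable_std_normal_distribution_moment)

lemma integrable_NN_poly_comp: fixes q :: "real poly" shows "integrable NN (\<lambda>x. poly q (s * x))"
proof -
  have "integrable NN (\<lambda>x. poly (pcompose q [:0, s:]) x)" by (rule integrable_NN_poly)
  then show ?thesis by (simp add: poly_pcompose mult.commute)
qed

lemma K_step: "fact (2 * Suc j) / (2 ^ Suc j * fact (Suc j)) = of_nat (2*j+1) * (fact (2 * j) / (2 ^ j * fact j) :: real)"
proof -
  have a: "fact (2 * Suc j) = (2 * of_nat j + 2) * (2 * of_nat j + 1) * (fact (2 * j) :: real)"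
    by (simp add: algebra_simps)
  have b: "(2::real) ^ Suc j * fact (Suc j) = 2 * (of_nat j + 1) * (2 ^ j * fact j)"
    by (simp add: algebra_simps)
  have G: "(2::real) ^ j * fact j \<noteq> 0" by simp
  have t: "(of_nat j + 1::real) \<noteq> 0" by (simp add: add_nonneg_eq_0_iff)
  have "(2 * of_nat j + 2) * (2 * of_nat j + 1) * (fact (2 * j) :: real) / (2 * (of_nat j + 1) * (2 ^ j * fact j))
      = (2 * (of_nat j + 1)) * ((2 * of_nat j + 1) * fact (2 * j)) / ((2 * (of_nat j + 1)) * (2 ^ j * fact j))"
    by (simp add: algebra_simps)
  also have "\<dots> = ((2 * of_nat j + 1) * fact (2 * j)) / (2 ^ j * fact j)"
    by (rule mult_divide_mult_cancel_left) (use t in simp)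
  finally show ?thesis unfolding a b by simp
qed

lemma NN_moment_step: "(\<integral>x. x * x ^ k \<partial>NN) = of_nat k * (\<integral>x. x ^ (k - 1) \<partial>NN)"
proof (cases "even k")
  case True
  then obtain j where k: "k = 2 * j" by blast
  have "(\<integral>x. x * x ^ k \<partial>NN) = (\<integral>x. x ^ (2 * j + 1) \<partial>NN)" by (simp add: k)
  also have "\<dots> = 0" by (rule integral_std_normal_distribution_moment_odd) simp
  finally have L: "(\<integral>x. x * x ^ k \<partial>NN) = 0" .
  show ?thesis
  proof (cases j)
    case 0 then show ?thesis using L k by simp
  next
    case (Suc i)
    then have "k - 1 = 2 * i + 1" using k by simp
    then have "(\<integral>x. x ^ (k - 1) \<partial>NN) = (\<integral>x. x ^ (2 * i + 1) \<partial>NN)" by simp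
    also have "\<dots> = 0" by (rule integral_std_normal_distribution_moment_odd) simp
    finally have "(\<integral>x. x ^ (k - 1) \<partial>NN) = 0" .
    then show ?thesis using L by simp
  qed
next
  case False
  then obtain j where k: "k = 2 * j + 1" by (metis oddE)
  have "(\<integral>x. x * x ^ k \<partial>NN) = (\<integral>x. x ^ (2 * (Suc j)) \<partial>NN)" by (simp add: k)
  also have "\<dots> = fact (2 * Suc j) / (2 ^ Suc j * fact (Suc j))"
    by (rule std_normal_distribution_even_moments)
  also have "\<dots> = of_nat (2*j+1) * (fact (2 * j) / (2 ^ j * fact j))" by (rule K_step)
  also have "fact (2 * j) / (2 ^ j * fact j) = (\<integral>x. x ^ (2 * j) \<partial>NN)"
    by (rule std_normal_distribution_even_moments(1)[symmetric])
  finally show ?thesis using k by simp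
qed

lemma poly_pderiv_sum: fixes q :: "real poly" shows "poly (pderiv q) x = (\<Sum>i\<le>degree q. coeff q i * (of_nat i * x ^ (i - 1)))"
proof -
  have "((\<lambda>x. \<Sum>i\<le>degree q. coeff q i * x ^ i) has_real_derivative
        (\<Sum>i\<le>degree q. coeff q i * (of_nat i * x ^ (i - 1)))) (at x)"
    by (auto intro!: derivative_eq_intros simp: mult_ac)
  then have "((\<lambda>x. poly q x) has_real_derivative (\<Sum>i\<le>degree q. coeff q i * (of_nat i * x ^ (i - 1)))) (at x)"
    by (simp add: poly_altdef)
  then show ?thesis using poly_DERIV[of q x] DERIV_unique by blast
qed

lemma NN_stein: fixes q :: "real poly" shows "(\<integral>x. x * poly q x \<partial>NN) = (\<integral>x. poly (pderiv q) x \<partial>NN)"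
proof -
  have "(\<integral>x. x * poly q x \<partial>NN) = (\<integral>x. (\<Sum>i\<le>degree q. coeff q i * (x * x ^ i)) \<partial>NN)"
    by (simp add: poly_altdef sum_distrib_left algebra_simps)
  also have "\<dots> = (\<Sum>i\<le>degree q. coeff q i * (\<integral>x. x * x ^ i \<partial>NN))"
    by (subst Bochner_Integration.integral_sum) (auto intro!: integrable_mult_right
        simp: integrable_std_normal_distribution_moment power_Suc[symmetric] simp del: power_Suc)
  also have "\<dots> = (\<Sum>i\<le>degree q. coeff q i * (of_nat i * (\<integral>x. x ^ (i - 1) \<partial>NN)))"
    by (simp add: NN_moment_step)
  also have "\<dots> = (\<integral>x. (\<Sum>i\<le>degree q. coeff q i * (of_nat i * x ^ (i - 1))) \<partial>NN)"
    by (subst Bochner_Integration.integral_sum) (auto intro!: integrable_mult_right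
        simp: integrable_std_normal_distribution_moment)
  also have "\<dots> = (\<integral>x. poly (pderiv q) x \<partial>NN)"
    by (simp add: poly_pderiv_sum)
  finally show ?thesis .
qed

lemma NN_stein_scaled: fixes q :: "real poly" shows
  "(\<integral>x. s * x * poly q (s * x) \<partial>NN) = s\<^sup>2 * (\<integral>x. poly (pderiv q) (s * x) \<partial>NN)"
proof -
  have "(\<integral>x. x * poly (pcompose q [:0, s:]) x \<partial>NN) = (\<integral>x. poly (pderiv (pcompose q [:0, s:])) x \<partial>NN)"
    by (rule NN_stein)
  then have "(\<integral>x. x * poly q (s * x) \<partial>NN) = (\<integral>x. poly (pderiv q) (s * x) * s \<partial>NN)"
    by (simp add: poly_pcompose pderiv_pcompose pderiv_pCons mult.commute)
  then show ?thesis
    by (simp add: power2_eq_square mult.assoc)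
qed

definition In :: "real \<Rightarrow> real \<Rightarrow> nat \<Rightarrow> real" where
  "In v s n = (\<integral>x. poly (Hv v n) (s * x) \<partial>NN)"

lemma In_rec: "In v s (Suc (Suc n)) = of_nat (Suc n) * (s\<^sup>2 - v) * In v s n"
proof -
  have "In v s (Suc (Suc n)) = (\<integral>x. s * x * poly (Hv v (Suc n)) (s * x) - v * of_nat (Suc n) * poly (Hv v n) (s * x) \<partial>NN)"
    by (simp add: In_def algebra_simps)
  also have "\<dots> = (\<integral>x. s * x * poly (Hv v (Suc n)) (s * x) \<partial>NN) - v * of_nat (Suc n) * In v s n"
  proof -
    have i1: "integrable NN (\<lambda>x. s * x * poly (Hv v (Suc n)) (s * x))"
    proof -
      have "integrable NN (\<lambda>x. poly ([:0,1:] * Hv v (Suc n)) (s * x))" by (rule integrable_NN_poly_comp)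
      then show ?thesis by simp
    qed
    show ?thesis
      by (subst Bochner_Integration.integral_diff[OF i1]) (auto intro!: integrable_mult_right integrable_NN_poly_comp simp: In_def)
  qed
  also have "\<dots> = s\<^sup>2 * of_nat (Suc n) * In v s n - v * of_nat (Suc n) * In v s n"
    by (simp add: NN_stein_scaled pderiv_Hv In_def del: of_nat_Suc)
  finally show ?thesis by (simp add: algebra_simps)
qed

lemma In_closed:
  "In v s n = (if even n then fact n / (2 ^ (n div 2) * fact (n div 2)) * (s\<^sup>2 - v) ^ (n div 2) else 0)"
proof (induction n rule: less_induct)
  case (less n)
  consider "n = 0" | "n = 1" | m where "n = Suc (Suc m)" by (metis One_nat_def not0_implies_Suc)
  then show ?case
  proof cases
    case 1 then show ?thesis using prob_space.prob_space[OF prob_NN]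
      by (simp add: In_def)
  next
    case 2 then show ?thesis
      using integral_std_normal_distribution_moment_odd[of 1] by (simp add: In_def)
  next
    case 3
    have IH: "In v s m = (if even m then fact m / (2 ^ (m div 2) * fact (m div 2)) * (s\<^sup>2 - v) ^ (m div 2) else 0)"
      using less 3 by simp
    show ?thesis
    proof (cases "even m")
      case False then show ?thesis using IH 3 In_rec by simp
    next
      case True
      then obtain j where j: "m = 2 * j" by blast
      have "In v s n = of_nat (2*j+1) * (s\<^sup>2 - v) * In v s (2 * j)"
        using In_rec[of v s m] 3 j by simp
      also have "\<dots> = of_nat (2*j+1) * (s\<^sup>2 - v) * (fact (2 * j) / (2 ^ j * fact j) * (s\<^sup>2 - v) ^ j)"
        using IH j by simp
      also have "\<dots> = (of_nat (2*j+1) * (fact (2 * j) / (2 ^ j * fact j))) * (s\<^sup>2 - v) ^ Suc j"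
        by (simp only: power_Suc mult_ac)
      also have "\<dots> = fact (2 * Suc j) / (2 ^ Suc j * fact (Suc j)) * (s\<^sup>2 - v) ^ Suc j"
        by (simp only: K_step)
      finally show ?thesis using 3 j by (simp del: fact_Suc)
    qed
  qed
qed




lemma sum_two:
  fixes F :: "nat \<Rightarrow> real"
  assumes "finite A" "i \<in> A" "j \<in> A"
  shows "(\<Sum>k\<in>A. ((if k = i then a else 0) + (if k = j then b else 0)) * F k) = a * F i + b * F j"
proof -
  have e: "\<And>k. ((if k = i then a else 0) + (if k = j then b else 0)) * F k = (if k = i then a * F k else 0) + (if k = j then b * F k else 0)"
    by (simp add: distrib_right)
  show ?thesis unfolding e sum.distrib using assms by simp
qed

lemma gauss_distr:
  assumes gauss: "centered_gaussian_vector M d X R"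
    and ij: "i \<in> {1..d}" "j \<in> {1..d}"
    and Rii: "R i i = 1" and Rjj: "R j j = 1" and Rsym: "R j i = R i j"
    and nn: "0 \<le> 1 + 2 * u * R i j + u\<^sup>2"
  shows "distr M borel (\<lambda>\<omega>. X i \<omega> + u * X j \<omega>) = distr NN borel (\<lambda>z. sqrt (1 + 2 * u * R i j + u\<^sup>2) * z)"
proof -
  have P: "prob_space M" and Xm: "\<And>k. k \<in> {1..d} \<Longrightarrow> X k \<in> borel_measurable M"
    and ch: "\<And>t. (CLINT \<omega>|M. cis (\<Sum>j\<in>{1..d}. t j * X j \<omega>)) =
        complex_of_real (exp (- (\<Sum>i\<in>{1..d}. \<Sum>j\<in>{1..d}. t i * t j * R i j) / 2))"
    using gauss unfolding centered_gaussian_vector_def by auto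
  interpret M: prob_space M by (rule P)
  interpret N: prob_space NN by (rule prob_NN)
  define \<sigma> where "\<sigma> = sqrt (1 + 2 * u * R i j + u\<^sup>2)"
  have s2: "\<sigma>\<^sup>2 = 1 + 2 * u * R i j + u\<^sup>2" unfolding \<sigma>_def using nn by simp
  have Vm[measurable]: "(\<lambda>\<omega>. X i \<omega> + u * X j \<omega>) \<in> borel_measurable M"
    using Xm ij by measurable
  show ?thesis
    unfolding \<sigma>_def[symmetric]
  proof (rule Levy_uniqueness)
    show "real_distribution (distr M borel (\<lambda>\<omega>. X i \<omega> + u * X j \<omega>))"
      by (rule M.real_distribution_distr) simp
    show "real_distribution (distr NN borel (\<lambda>z. \<sigma> * z))"
      by (rule N.real_distribution_distr) simp
    show "char (distr M borel (\<lambda>\<omega>. X i \<omega> + u * X j \<omega>)) = char (distr NN borel (\<lambda>z. \<sigma> * z))"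
    proof
      fix t
      define tt where "tt k = (if k = i then t else 0) + (if k = j then t * u else 0)" for k
      have lin: "(\<Sum>k\<in>{1..d}. tt k * X k \<omega>) = t * (X i \<omega> + u * X j \<omega>)" for \<omega>
        unfolding tt_def using sum_two[of "{1..d}" i j t "t * u" "\<lambda>k. X k \<omega>"] ij
        by (simp add: algebra_simps)
      have quad: "(\<Sum>k\<in>{1..d}. \<Sum>l\<in>{1..d}. tt k * tt l * R k l) = t\<^sup>2 * \<sigma>\<^sup>2"
      proof -
        have "(\<Sum>k\<in>{1..d}. \<Sum>l\<in>{1..d}. tt k * tt l * R k l)
            = (\<Sum>k\<in>{1..d}. tt k * (\<Sum>l\<in>{1..d}. tt l * R k l))"
          by (simp add: sum_distrib_left mult.assoc)
        also have "\<dots> = (\<Sum>k\<in>{1..d}. tt k * (t * R k i + t * u * R k j))"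
          unfolding tt_def using sum_two[of "{1..d}" i j t "t * u"] ij by simp
        also have "\<dots> = t * (t * R i i + t * u * R i j) + t * u * (t * R j i + t * u * R j j)"
          unfolding tt_def using sum_two[of "{1..d}" i j t "t * u" "\<lambda>k. t * R k i + t * u * R k j"] ij by simp
        also have "\<dots> = t\<^sup>2 * \<sigma>\<^sup>2"
          unfolding s2 Rii Rjj Rsym by (simp add: algebra_simps power2_eq_square)
        finally show ?thesis .
      qed
      have "char (distr M borel (\<lambda>\<omega>. X i \<omega> + u * X j \<omega>)) t = (CLINT \<omega>|M. iexp (t * (X i \<omega> + u * X j \<omega>)))"
        unfolding char_def by (rule integral_distr) (simp_all)
      also have "\<dots> = (CLINT \<omega>|M. cis (\<Sum>k\<in>{1..d}. tt k * X k \<omega>))"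
        unfolding lin by (simp add: cis_conv_exp)
      also have "\<dots> = complex_of_real (exp (- (t\<^sup>2 * \<sigma>\<^sup>2) / 2))"
        using ch[of tt] quad by simp
      also have "\<dots> = char NN (t * \<sigma>)"
        by (simp add: char_std_normal_distribution power_mult_distrib)
      also have "\<dots> = (CLINT z|NN. iexp (t * (\<sigma> * z)))"
        unfolding char_def by (simp add: mult.assoc)
      also have "\<dots> = char (distr NN borel (\<lambda>z. \<sigma> * z)) t"
        unfolding char_def by (rule integral_distr[symmetric]) (simp_all)
      finally show "char (distr M borel (\<lambda>\<omega>. X i \<omega> + u * X j \<omega>)) t = char (distr NN borel (\<lambda>z. \<sigma> * z)) t" .
    qed
  qed
qed

lemma distr_transfer:
  fixes h :: "real \<Rightarrow> real"
  assumes eq: "distr M borel V = distr NN borel W"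
    and [measurable]: "V \<in> borel_measurable M" "W \<in> borel_measurable borel" "h \<in> borel_measurable borel"
  shows "integral\<^sup>L M (\<lambda>\<omega>. h (V \<omega>)) = integral\<^sup>L NN (\<lambda>z. h (W z))"
    and "integrable M (\<lambda>\<omega>. h (V \<omega>)) \<longleftrightarrow> integrable NN (\<lambda>z. h (W z))"
proof -
  have Wm: "W \<in> measurable NN borel" by simp
  show "integral\<^sup>L M (\<lambda>\<omega>. h (V \<omega>)) = integral\<^sup>L NN (\<lambda>z. h (W z))"
    using integral_distr[of V M borel h] integral_distr[OF Wm, of h] eq by simp
  show "integrable M (\<lambda>\<omega>. h (V \<omega>)) \<longleftrightarrow> integrable NN (\<lambda>z. h (W z))"
    using integrable_distr_eq[of V M borel h] integrable_distr_eq[OF Wm, of h] eq by simp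
qed




lemma abs_prod_le: "\<bar>a * b\<bar> \<le> a\<^sup>2 + (b::real)\<^sup>2"
proof -
  have "0 \<le> (\<bar>a\<bar> - \<bar>b\<bar>)\<^sup>2" by simp
  also have "\<dots> = \<bar>a\<bar>\<^sup>2 + \<bar>b\<bar>\<^sup>2 - 2 * (\<bar>a\<bar> * \<bar>b\<bar>)" by (simp add: power2_diff)
  finally have "2 * (\<bar>a\<bar> * \<bar>b\<bar>) \<le> a\<^sup>2 + b\<^sup>2" by simp
  moreover have "0 \<le> \<bar>a\<bar> * \<bar>b\<bar>" by simp
  ultimately have "\<bar>a\<bar> * \<bar>b\<bar> \<le> a\<^sup>2 + b\<^sup>2" by linarith
  then show ?thesis by (simp add: abs_mult)
qed

lemma integrable_prod_sq:
  fixes a b :: "'a \<Rightarrow> real"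
  assumes [measurable]: "a \<in> borel_measurable M" "b \<in> borel_measurable M"
    and ia: "integrable M (\<lambda>\<omega>. (a \<omega>)\<^sup>2)" and ib: "integrable M (\<lambda>\<omega>. (b \<omega>)\<^sup>2)"
  shows "integrable M (\<lambda>\<omega>. a \<omega> * b \<omega>)"
proof (rule Bochner_Integration.integrable_bound)
  show "integrable M (\<lambda>\<omega>. (a \<omega>)\<^sup>2 + (b \<omega>)\<^sup>2)" using ia ib by simp
  show "(\<lambda>\<omega>. a \<omega> * b \<omega>) \<in> borel_measurable M" by measurable
  show "AE \<omega> in M. norm (a \<omega> * b \<omega>) \<le> norm ((a \<omega>)\<^sup>2 + (b \<omega>)\<^sup>2)"
  proof (intro AE_I2)
    fix \<omega>
    have "0 \<le> (a \<omega>)\<^sup>2 + (b \<omega>)\<^sup>2" by simp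
    then show "norm (a \<omega> * b \<omega>) \<le> norm ((a \<omega>)\<^sup>2 + (b \<omega>)\<^sup>2)"
      using abs_prod_le[of "a \<omega>" "b \<omega>"] by (simp only: real_norm_def abs_of_nonneg)
  qed
qed

lemma poly_meas[measurable]: "(\<lambda>x. poly (p::real poly) x) \<in> borel_measurable borel"
  by (rule borel_measurable_continuous_onI) (intro continuous_intros)

lemma id_meas: "(\<lambda>z::real. z) \<in> borel_measurable borel"
  by simp

lemma scale_meas: "(\<lambda>z::real. s * z) \<in> borel_measurable borel"
  by simp

lemma hermite_corr:
  assumes gauss: "centered_gaussian_vector M d X R"
    and ij: "i \<in> {1..d}" "j \<in> {1..d}"
    and Rii: "R i i = 1" and Rjj: "R j j = 1" and Rsym: "R j i = R i j"
    and nn: "\<And>u. 0 \<le> 1 + 2 * u * R i j + u\<^sup>2"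
  shows "(\<integral>\<omega>. poly (Hv 1 k) (X i \<omega>) * poly (Hv 1 l) (X j \<omega>) \<partial>M) = (if k = l then fact k * R i j ^ k else 0)"
    and "integrable M (\<lambda>\<omega>. poly p (X i \<omega>) * poly q (X j \<omega>))"
proof -
  have Xm[measurable]: "X i \<in> borel_measurable M" "X j \<in> borel_measurable M"
    using gauss ij unfolding centered_gaussian_vector_def by auto
  have Rji: "R j j = 1" "R i i = 1" "R i j = R j i" using Rii Rjj Rsym by auto
  have margi: "distr M borel (X i) = distr NN borel (\<lambda>z. z)"
    using gauss_distr[OF gauss ij Rii Rjj Rsym, of 0] by simp
  have margj: "distr M borel (X j) = distr NN borel (\<lambda>z. z)"
    using gauss_distr[OF gauss ij(2) ij(1) Rjj Rii Rji(3), of 0] by simp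
  have inti: "integrable M (\<lambda>\<omega>. poly p (X i \<omega>))" for p
    using distr_transfer(2)[OF margi Xm(1) id_meas poly_meas] integrable_NN_poly[of p] by simp
  have intj: "integrable M (\<lambda>\<omega>. poly p (X j \<omega>))" for p
    using distr_transfer(2)[OF margj Xm(2) id_meas poly_meas] integrable_NN_poly[of p] by simp
  have intp: "integrable M (\<lambda>\<omega>. poly p (X i \<omega>) * poly q (X j \<omega>))" for p q
    by (rule integrable_prod_sq) (use inti[of "p * p"] intj[of "q * q"] in \<open>simp_all add: power2_eq_square\<close>)
  then show "integrable M (\<lambda>\<omega>. poly p (X i \<omega>) * poly q (X j \<omega>))" .
  define c where "c k l = (\<integral>\<omega>. poly (Hv 1 k) (X i \<omega>) * poly (Hv 1 l) (X j \<omega>) \<partial>M)" for k l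
  define K where "K n = (fact n / (2 ^ (n div 2) * fact (n div 2)) :: real)" for n
  have coef: "of_nat (n choose m) * c (n - m) m = (if even n \<and> m = n div 2 then K n * (2 * R i j) ^ m else 0)"
    if "m \<le> n" for n m
  proof -
    define dd where "dd m = (if even n \<and> m = n div 2 then K n * (2 * R i j) ^ m else 0)" for m
    have "(\<Sum>m\<le>n. (of_nat (n choose m) * c (n - m) m) * u ^ m) = (\<Sum>m\<le>n. dd m * u ^ m)" for u
    proof -
      define \<sigma> where "\<sigma> = sqrt (1 + 2 * u * R i j + u\<^sup>2)"
      have s2: "\<sigma>\<^sup>2 = 1 + 2 * u * R i j + u\<^sup>2" unfolding \<sigma>_def using nn[of u] by simp
      have dist: "distr M borel (\<lambda>\<omega>. X i \<omega> + u * X j \<omega>) = distr NN borel (\<lambda>z. \<sigma> * z)"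
        unfolding \<sigma>_def by (rule gauss_distr[OF gauss ij Rii Rjj Rsym nn])
      have "(\<Sum>m\<le>n. (of_nat (n choose m) * c (n - m) m) * u ^ m)
          = (\<Sum>m\<le>n. (\<integral>\<omega>. of_nat (n choose m) * u ^ m * poly (Hv 1 m) (X j \<omega>) * poly (Hv 1 (n - m)) (X i \<omega>) \<partial>M))"
        unfolding c_def by (intro sum.cong refl) (simp add: algebra_simps)
      also have "\<dots> = (\<integral>\<omega>. (\<Sum>m\<le>n. of_nat (n choose m) * u ^ m * poly (Hv 1 m) (X j \<omega>) * poly (Hv 1 (n - m)) (X i \<omega>)) \<partial>M)"
      proof (rule Bochner_Integration.integral_sum[symmetric])
        fix m
        have "integrable M (\<lambda>\<omega>. of_nat (n choose m) * u ^ m * (poly (Hv 1 (n - m)) (X i \<omega>) * poly (Hv 1 m) (X j \<omega>)))"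
          using intp by simp
        then show "integrable M (\<lambda>\<omega>. of_nat (n choose m) * u ^ m * poly (Hv 1 m) (X j \<omega>) * poly (Hv 1 (n - m)) (X i \<omega>))"
          by (simp add: algebra_simps)
      qed
      also have "\<dots> = (\<integral>\<omega>. poly (Hv (1 + u\<^sup>2) n) (X i \<omega> + u * X j \<omega>) \<partial>M)"
        by (simp only: Hv_add)
      also have "\<dots> = (\<integral>z. poly (Hv (1 + u\<^sup>2) n) (\<sigma> * z) \<partial>NN)"
      proof (rule distr_transfer(1)[OF dist _ scale_meas poly_meas])
        show "(\<lambda>\<omega>. X i \<omega> + u * X j \<omega>) \<in> borel_measurable M" using Xm by measurable
      qed
      also have "\<dots> = In (1 + u\<^sup>2) \<sigma> n" by (simp add: In_def)
      also have "\<dots> = (if even n then K n * (2 * u * R i j) ^ (n div 2) else 0)"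
      proof -
        have w: "\<sigma>\<^sup>2 - (1 + u\<^sup>2) = 2 * u * R i j" using s2 by simp
        show ?thesis by (simp only: In_closed K_def w)
      qed
      also have "\<dots> = (\<Sum>m\<le>n. dd m * u ^ m)"
      proof (cases "even n")
        case True
        have "(\<Sum>m\<le>n. dd m * u ^ m) = (\<Sum>m\<le>n. if m = n div 2 then K n * (2 * R i j) ^ m * u ^ m else 0)"
          unfolding dd_def using True by (intro sum.cong refl) auto
        also have "\<dots> = K n * (2 * R i j) ^ (n div 2) * u ^ (n div 2)"
          by (subst sum.delta) auto
        finally show ?thesis using True by (simp add: power_mult_distrib algebra_simps)
      next
        case False then show ?thesis unfolding dd_def by simp
      qed
      finally show ?thesis .
    qed
    then have "\<forall>m\<le>n. of_nat (n choose m) * c (n - m) m = dd m"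
      using polyfun_eq_coeffs[of "\<lambda>m. of_nat (n choose m) * c (n - m) m" n dd] by blast
    then show ?thesis using that unfolding dd_def by blast
  qed
  show "(\<integral>\<omega>. poly (Hv 1 k) (X i \<omega>) * poly (Hv 1 l) (X j \<omega>) \<partial>M) = (if k = l then fact k * R i j ^ k else 0)"
  proof (cases "k = l")
    case False
    have "of_nat ((k + l) choose l) * c k l = 0"
    proof -
      have cond: "(even (k + l) \<and> l = (k + l) div 2) = False" using False by presburger
      have "of_nat ((k + l) choose l) * c ((k + l) - l) l = (if even (k + l) \<and> l = (k + l) div 2 then K (k + l) * (2 * R i j) ^ l else 0)"
        by (rule coef) simp
      then show ?thesis by (simp only: cond if_False add_diff_cancel_right')
    qed
    moreover have "of_nat ((k + l) choose l) \<noteq> (0::real)" by simp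
    ultimately show ?thesis using False by (simp add: c_def)
  next
    case True
    have e1: "of_nat ((2 * k) choose k) * c k k = K (2 * k) * (2 * R i j) ^ k"
    proof -
      have cond: "(even (k + k) \<and> k = (k + k) div 2) = True" by presburger
      have "of_nat ((k + k) choose k) * c ((k + k) - k) k = (if even (k + k) \<and> k = (k + k) div 2 then K (k + k) * (2 * R i j) ^ k else 0)"
        by (rule coef) simp
      then show ?thesis by (simp only: cond if_True add_diff_cancel_right' mult_2)
    qed
    have e2: "of_nat ((2 * k) choose k) = (fact (2 * k) / (fact k * fact k) :: real)"
      by (simp add: binomial_fact mult_2)
    have e3: "K (2 * k) * (2 * R i j) ^ k = fact (2 * k) / (fact k * fact k) * (fact k * R i j ^ k)"
    proof -
      have "K (2 * k) = fact (2 * k) / (2 ^ k * fact k)" unfolding K_def by simp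
      moreover have "(2 * R i j) ^ k = 2 ^ k * R i j ^ k" by (simp add: power_mult_distrib)
      moreover have "fact (2 * k) / (2 ^ k * fact k) * (2 ^ k * R i j ^ k) = fact (2 * k) / (fact k * fact k) * (fact k * (R i j ^ k :: real))"
        by (simp add: field_simps)
      ultimately show ?thesis by simp
    qed
    have "fact (2 * k) / (fact k * fact k) * c k k = fact (2 * k) / (fact k * fact k) * (fact k * R i j ^ k)"
      using e1 e2 e3 by simp
    moreover have "fact (2 * k) / (fact k * fact k) \<noteq> (0::real)" by simp
    ultimately have "c k k = fact k * R i j ^ k"
      using mult_left_cancel by blast
    then show ?thesis using True by (simp add: c_def)
  qed
qed




lemma quad_disc:
  fixes A B C :: real
  assumes B: "0 \<le> B" and q: "\<And>t. 0 \<le> A + 2 * t * C + t\<^sup>2 * B"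
  shows "C\<^sup>2 \<le> A * B"
proof (cases "B = 0")
  case True
  have "C = 0"
  proof (rule ccontr)
    assume "C \<noteq> 0"
    have "0 \<le> A + 2 * (- (A + 1) / (2 * C)) * C + (- (A + 1) / (2 * C))\<^sup>2 * B" by (rule q)
    also have "\<dots> = -1" using True \<open>C \<noteq> 0\<close> by (simp add: field_simps)
    finally show False by simp
  qed
  then show ?thesis using True by simp
next
  case False
  then have Bp: "0 < B" using B by simp
  have "0 \<le> A + 2 * (- C / B) * C + (- C / B)\<^sup>2 * B" by (rule q)
  also have "\<dots> = A - C\<^sup>2 / B" using Bp by (simp add: field_simps power2_eq_square)
  finally have "C\<^sup>2 / B \<le> A" by simp
  then show ?thesis using Bp by (simp add: divide_le_eq mult.commute)
qed

lemma cauchy_schwarz_L2: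
  fixes a b :: "'a \<Rightarrow> real"
  assumes [measurable]: "a \<in> borel_measurable M" "b \<in> borel_measurable M"
    and ia: "integrable M (\<lambda>\<omega>. (a \<omega>)\<^sup>2)" and ib: "integrable M (\<lambda>\<omega>. (b \<omega>)\<^sup>2)"
  shows "\<bar>\<integral>\<omega>. a \<omega> * b \<omega> \<partial>M\<bar> \<le> sqrt (\<integral>\<omega>. (a \<omega>)\<^sup>2 \<partial>M) * sqrt (\<integral>\<omega>. (b \<omega>)\<^sup>2 \<partial>M)"
proof -
  have iab: "integrable M (\<lambda>\<omega>. a \<omega> * b \<omega>)" by (rule integrable_prod_sq) (use ia ib in auto)
  define A where "A = (\<integral>\<omega>. (a \<omega>)\<^sup>2 \<partial>M)"
  define B where "B = (\<integral>\<omega>. (b \<omega>)\<^sup>2 \<partial>M)"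
  define C where "C = (\<integral>\<omega>. a \<omega> * b \<omega> \<partial>M)"
  have "0 \<le> A + 2 * t * C + t\<^sup>2 * B" for t
  proof -
    have "0 \<le> (\<integral>\<omega>. (a \<omega> + t * b \<omega>)\<^sup>2 \<partial>M)" by simp
    also have "(\<integral>\<omega>. (a \<omega> + t * b \<omega>)\<^sup>2 \<partial>M) = (\<integral>\<omega>. (a \<omega>)\<^sup>2 + ((2 * t) * (a \<omega> * b \<omega>) + t\<^sup>2 * (b \<omega>)\<^sup>2) \<partial>M)"
      by (intro Bochner_Integration.integral_cong refl) (simp add: power2_sum power_mult_distrib algebra_simps)
    also have "\<dots> = A + ((2 * t) * C + t\<^sup>2 * B)"
      unfolding A_def B_def C_def using ia ib iab
      by (simp add: Bochner_Integration.integral_add)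
    finally show ?thesis by (simp add: algebra_simps)
  qed
  then have "C\<^sup>2 \<le> A * B" by (intro quad_disc) (simp_all add: B_def)
  then have "sqrt (C\<^sup>2) \<le> sqrt (A * B)" by (rule real_sqrt_le_mono)
  then show ?thesis by (simp add: A_def B_def C_def real_sqrt_mult)
qed

lemma L2_lim:
  fixes A B :: "'a \<Rightarrow> real" and AK BK :: "nat \<Rightarrow> 'a \<Rightarrow> real"
  assumes [measurable]: "A \<in> borel_measurable M" "B \<in> borel_measurable M"
    "\<And>K. AK K \<in> borel_measurable M" "\<And>K. BK K \<in> borel_measurable M"
    and iA: "integrable M (\<lambda>\<omega>. (A \<omega>)\<^sup>2)" and iB: "integrable M (\<lambda>\<omega>. (B \<omega>)\<^sup>2)"
    and iAK: "\<And>K. integrable M (\<lambda>\<omega>. (AK K \<omega>)\<^sup>2)" and iBK: "\<And>K. integrable M (\<lambda>\<omega>. (BK K \<omega>)\<^sup>2)"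
    and iDA: "\<And>K. integrable M (\<lambda>\<omega>. (A \<omega> - AK K \<omega>)\<^sup>2)" and iDB: "\<And>K. integrable M (\<lambda>\<omega>. (B \<omega> - BK K \<omega>)\<^sup>2)"
    and lA: "(\<lambda>K. \<integral>\<omega>. (A \<omega> - AK K \<omega>)\<^sup>2 \<partial>M) \<longlonglongrightarrow> 0"
    and lB: "(\<lambda>K. \<integral>\<omega>. (B \<omega> - BK K \<omega>)\<^sup>2 \<partial>M) \<longlonglongrightarrow> 0"
    and bAK: "\<And>K. (\<integral>\<omega>. (AK K \<omega>)\<^sup>2 \<partial>M) \<le> 1"
  shows "(\<lambda>K. \<integral>\<omega>. AK K \<omega> * BK K \<omega> \<partial>M) \<longlonglongrightarrow> (\<integral>\<omega>. A \<omega> * B \<omega> \<partial>M)"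
proof -
  define eA where "eA K = (\<integral>\<omega>. (A \<omega> - AK K \<omega>)\<^sup>2 \<partial>M)" for K
  define eB where "eB K = (\<integral>\<omega>. (B \<omega> - BK K \<omega>)\<^sup>2 \<partial>M)" for K
  define SB where "SB = (\<integral>\<omega>. (B \<omega>)\<^sup>2 \<partial>M)"
  have bound: "norm ((\<integral>\<omega>. AK K \<omega> * BK K \<omega> \<partial>M) - (\<integral>\<omega>. A \<omega> * B \<omega> \<partial>M)) \<le> sqrt (eA K) * sqrt SB + sqrt (eB K)" for K
  proof -
    have i1: "integrable M (\<lambda>\<omega>. (A \<omega> - AK K \<omega>) * B \<omega>)"
      by (rule integrable_prod_sq) (use iDA iB in auto)
    have i2: "integrable M (\<lambda>\<omega>. AK K \<omega> * (B \<omega> - BK K \<omega>))"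
      by (rule integrable_prod_sq) (use iAK iDB in auto)
    have i3: "integrable M (\<lambda>\<omega>. A \<omega> * B \<omega>)"
      by (rule integrable_prod_sq) (use iA iB in auto)
    have i4: "integrable M (\<lambda>\<omega>. AK K \<omega> * BK K \<omega>)"
      by (rule integrable_prod_sq) (use iAK iBK in auto)
    have "(\<integral>\<omega>. A \<omega> * B \<omega> \<partial>M) - (\<integral>\<omega>. AK K \<omega> * BK K \<omega> \<partial>M)
        = (\<integral>\<omega>. A \<omega> * B \<omega> - AK K \<omega> * BK K \<omega> \<partial>M)"
      using i3 i4 by simp
    also have "\<dots> = (\<integral>\<omega>. (A \<omega> - AK K \<omega>) * B \<omega> + AK K \<omega> * (B \<omega> - BK K \<omega>) \<partial>M)"
      by (intro Bochner_Integration.integral_cong refl) (simp add: algebra_simps)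
    also have "\<dots> = (\<integral>\<omega>. (A \<omega> - AK K \<omega>) * B \<omega> \<partial>M) + (\<integral>\<omega>. AK K \<omega> * (B \<omega> - BK K \<omega>) \<partial>M)"
      using i1 i2 by simp
    finally have eq: "(\<integral>\<omega>. A \<omega> * B \<omega> \<partial>M) - (\<integral>\<omega>. AK K \<omega> * BK K \<omega> \<partial>M) =
        (\<integral>\<omega>. (A \<omega> - AK K \<omega>) * B \<omega> \<partial>M) + (\<integral>\<omega>. AK K \<omega> * (B \<omega> - BK K \<omega>) \<partial>M)" .
    have c1: "\<bar>\<integral>\<omega>. (A \<omega> - AK K \<omega>) * B \<omega> \<partial>M\<bar> \<le> sqrt (eA K) * sqrt SB"
      unfolding eA_def SB_def by (rule cauchy_schwarz_L2) (use iDA iB in auto)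
    have c2: "\<bar>\<integral>\<omega>. AK K \<omega> * (B \<omega> - BK K \<omega>) \<partial>M\<bar> \<le> sqrt (\<integral>\<omega>. (AK K \<omega>)\<^sup>2 \<partial>M) * sqrt (eB K)"
      unfolding eB_def by (rule cauchy_schwarz_L2) (use iAK iDB in auto)
    have "sqrt (\<integral>\<omega>. (AK K \<omega>)\<^sup>2 \<partial>M) \<le> 1" using bAK[of K] by simp
    moreover have "0 \<le> sqrt (eB K)" unfolding eB_def by simp
    ultimately have "sqrt (\<integral>\<omega>. (AK K \<omega>)\<^sup>2 \<partial>M) * sqrt (eB K) \<le> sqrt (eB K)"
      by (simp add: mult_left_le_one_le)
    then show ?thesis using eq c1 c2 by (simp add: abs_minus_commute)
  qed
  have "(\<lambda>K. sqrt (eA K) * sqrt SB + sqrt (eB K)) \<longlonglongrightarrow> sqrt 0 * sqrt SB + sqrt 0"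
    using lA lB unfolding eA_def eB_def by (intro tendsto_intros)
  then have "(\<lambda>K. sqrt (eA K) * sqrt SB + sqrt (eB K)) \<longlonglongrightarrow> 0" by simp
  then have "(\<lambda>K. (\<integral>\<omega>. AK K \<omega> * BK K \<omega> \<partial>M) - (\<integral>\<omega>. A \<omega> * B \<omega> \<partial>M)) \<longlonglongrightarrow> 0"
    by (rule Lim_null_comparison[rotated]) (use bound in simp)
  then show ?thesis by (simp add: LIM_zero_iff)
qed




theorem corollary4p3:
  fixes p :: "nat \<Rightarrow> real" and g :: "real \<Rightarrow> real"
    and d :: nat and R :: "nat \<Rightarrow> nat \<Rightarrow> real"
    and \<epsilon> :: "nat \<Rightarrow> real" and f :: "real \<Rightarrow> real"
    and M :: "'a measure" and X :: "nat \<Rightarrow> 'a \<Rightarrow> real"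
  assumes p_nonneg: "\<And>n. n \<ge> 1 \<Longrightarrow> p n \<ge> 0"
    and p_sum: "(\<lambda>n. p (n + 1)) sums 1"
    and g_def: "\<And>r. r \<in> {-1..1} \<Longrightarrow> g r = (\<Sum>n. p (n + 1) * r ^ (n + 1))"
    and R_sym: "\<And>i j. i \<in> {1..d} \<Longrightarrow> j \<in> {1..d} \<Longrightarrow> R i j = R j i"
    and R_psd: "\<And>c :: nat \<Rightarrow> real. (\<Sum>i\<in>{1..d}. \<Sum>j\<in>{1..d}. c i * c j * R i j) \<ge> 0"
    and R_diag: "\<And>i. i \<in> {1..d} \<Longrightarrow> R i i = 1"
    and eps: "\<And>n. n \<ge> 1 \<Longrightarrow> \<epsilon> n \<in> {-1, 1}"
    and f_meas: "f \<in> borel_measurable borel"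
    and f_L2: "(\<lambda>N. \<integral>\<^sup>+ x. ennreal ((f x - (\<Sum>n=1..N. \<epsilon> n * sqrt (p n) * hermite n x / sqrt (fact n)))\<^sup>2)
                   \<partial>std_normal_distribution) \<longlonglongrightarrow> 0"
    and gauss: "centered_gaussian_vector M d X R"
  shows "\<forall>i\<in>{1..d}. \<forall>j\<in>{1..d}.
           integrable M (\<lambda>\<omega>. (f (X i \<omega>))\<^sup>2) \<and>
           covariance M (\<lambda>\<omega>. f (X i \<omega>)) (\<lambda>\<omega>. f (X j \<omega>)) = g (R i j) \<and>
           correlation M (\<lambda>\<omega>. f (X i \<omega>)) (\<lambda>\<omega>. f (X j \<omega>)) = g (R i j)"
proof -
  have P: "prob_space M" and Xm: "\<And>k. k \<in> {1..d} \<Longrightarrow> X k \<in> borel_measurable M"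
    using gauss unfolding centered_gaussian_vector_def by auto
  interpret M: prob_space M by (rule P)
  interpret N: prob_space NN by (rule prob_NN)
  define a where "a n = \<epsilon> n * sqrt (p n) / sqrt (fact n)" for n
  define PK where "PK K = (\<Sum>n=1..K. smult (a n) (Hv 1 n))" for K
  define fK where "fK K x = poly (PK K) x" for K x
  have fK_sum: "fK K x = (\<Sum>n=1..K. a n * poly (Hv 1 n) x)" for K x
    by (simp add: fK_def PK_def poly_sum)
  have fKm[measurable]: "(\<lambda>x. fK K x) \<in> borel_measurable borel" for K
    unfolding fK_def by (rule poly_meas)
  note fm[measurable] = f_meas
  have fL2: "(\<lambda>K. \<integral>\<^sup>+ x. ennreal ((f x - fK K x)\<^sup>2) \<partial>NN) \<longlonglongrightarrow> 0"
  proof -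
    have "(\<Sum>n=1..K. \<epsilon> n * sqrt (p n) * hermite n x / sqrt (fact n)) = fK K x" for K x
      unfolding fK_sum a_def hermite_Hv by (intro sum.cong refl) simp
    then show ?thesis using f_L2 by simp
  qed
  have intK2: "integrable NN (\<lambda>x. (fK K x)\<^sup>2)" for K
    using integrable_NN_poly[of "PK K * PK K"] by (simp add: fK_def power2_eq_square)
  obtain K0 where K0: "(\<integral>\<^sup>+ x. ennreal ((f x - fK K0 x)\<^sup>2) \<partial>NN) < 1"
    using order_tendstoD(2)[OF fL2, of 1] by (auto simp: eventually_sequentially)
  have iD0: "integrable NN (\<lambda>x. (f x - fK K0 x)\<^sup>2)"
  proof (rule integrableI_nonneg)
    show "(\<lambda>x. (f x - fK K0 x)\<^sup>2) \<in> borel_measurable NN" by simp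
    show "AE x in NN. 0 \<le> (f x - fK K0 x)\<^sup>2" by simp
    show "(\<integral>\<^sup>+ x. ennreal ((f x - fK K0 x)\<^sup>2) \<partial>NN) < \<infinity>"
      using order_less_trans[OF K0, of \<infinity>] by simp
  qed
  have sqb: "(x + y)\<^sup>2 \<le> 2 * x\<^sup>2 + 2 * (y::real)\<^sup>2" for x y
  proof -
    have "0 \<le> (x - y)\<^sup>2" by simp
    then show ?thesis by (simp add: power2_sum power2_diff)
  qed
  have if2: "integrable NN (\<lambda>x. (f x)\<^sup>2)"
  proof (rule Bochner_Integration.integrable_bound)
    show "integrable NN (\<lambda>x. 2 * (f x - fK K0 x)\<^sup>2 + 2 * (fK K0 x)\<^sup>2)"
      using iD0 intK2[of K0] by simp
    show "(\<lambda>x. (f x)\<^sup>2) \<in> borel_measurable NN" by simp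
    show "AE x in NN. norm ((f x)\<^sup>2) \<le> norm (2 * (f x - fK K0 x)\<^sup>2 + 2 * (fK K0 x)\<^sup>2)"
    proof (intro AE_I2)
      fix x show "norm ((f x)\<^sup>2) \<le> norm (2 * (f x - fK K0 x)\<^sup>2 + 2 * (fK K0 x)\<^sup>2)"
        using sqb[of "f x - fK K0 x" "fK K0 x"] by simp
    qed
  qed
  have iDK: "integrable NN (\<lambda>x. (f x - fK K x)\<^sup>2)" for K
  proof (rule Bochner_Integration.integrable_bound)
    show "integrable NN (\<lambda>x. 2 * (f x)\<^sup>2 + 2 * (- fK K x)\<^sup>2)"
      using if2 intK2[of K] by simp
    show "(\<lambda>x. (f x - fK K x)\<^sup>2) \<in> borel_measurable NN" by simp
    show "AE x in NN. norm ((f x - fK K x)\<^sup>2) \<le> norm (2 * (f x)\<^sup>2 + 2 * (- fK K x)\<^sup>2)"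
    proof (intro AE_I2)
      fix x show "norm ((f x - fK K x)\<^sup>2) \<le> norm (2 * (f x)\<^sup>2 + 2 * (- fK K x)\<^sup>2)"
        using sqb[of "f x" "- fK K x"] by simp
    qed
  qed
  define eK where "eK K = (\<integral>x. (f x - fK K x)\<^sup>2 \<partial>NN)" for K
  have eK0: "eK \<longlonglongrightarrow> 0"
  proof -
    have "ennreal (eK K) = (\<integral>\<^sup>+ x. ennreal ((f x - fK K x)\<^sup>2) \<partial>NN)" for K
      unfolding eK_def by (rule nn_integral_eq_integral[symmetric]) (use iDK in auto)
    then have L: "(\<lambda>K. ennreal (eK K)) \<longlonglongrightarrow> ennreal 0" using fL2 by simp
    have "0 \<le> eK K" for K unfolding eK_def by simp
    then have "\<forall>\<^sub>F K in sequentially. 0 \<le> eK K" by simp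
    from tendsto_ennreal_iff[OF this order_refl] L show ?thesis by blast
  qed
  have marg: "distr M borel (X i) = distr NN borel (\<lambda>z. z)" if i: "i \<in> {1..d}" for i
    using gauss_distr[OF gauss i i R_diag[OF i] R_diag[OF i] refl, of 0] by simp
  have trI: "integral\<^sup>L M (\<lambda>\<omega>. h (X i \<omega>)) = integral\<^sup>L NN h"
    and trJ: "integrable M (\<lambda>\<omega>. h (X i \<omega>)) \<longleftrightarrow> integrable NN h"
    if i: "i \<in> {1..d}" and hm: "h \<in> borel_measurable borel" for i and h :: "real \<Rightarrow> real"
    using distr_transfer[OF marg[OF i] Xm[OF i] id_meas hm] by simp_all
  have nnq: "0 \<le> 1 + 2 * u * R i j + u\<^sup>2" if ij: "i \<in> {1..d}" "j \<in> {1..d}" for i j u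
  proof -
    define c where "c k = (if k = i then 1 else 0) + (if k = j then u else 0)" for k
    have "(\<Sum>k\<in>{1..d}. \<Sum>l\<in>{1..d}. c k * c l * R k l) = (\<Sum>k\<in>{1..d}. c k * (\<Sum>l\<in>{1..d}. c l * R k l))"
      by (simp add: sum_distrib_left mult.assoc)
    also have "\<dots> = (\<Sum>k\<in>{1..d}. c k * (1 * R k i + u * R k j))"
      unfolding c_def using sum_two[of "{1..d}" i j 1 u] ij by simp
    also have "\<dots> = 1 * (1 * R i i + u * R i j) + u * (1 * R j i + u * R j j)"
      unfolding c_def using sum_two[of "{1..d}" i j 1 u "\<lambda>k. 1 * R k i + u * R k j"] ij by simp
    also have "\<dots> = 1 + 2 * u * R i j + u\<^sup>2"
      using R_diag ij R_sym[of j i] by (simp add: algebra_simps power2_eq_square)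
    finally show ?thesis using R_psd[of c] by simp
  qed
  have aa: "a n * a n * fact n = p n" if "n \<ge> 1" for n
  proof -
    have e2: "\<epsilon> n * \<epsilon> n = 1" using eps[OF that] by auto
    have "a n * a n = (\<epsilon> n * \<epsilon> n) * (sqrt (p n) * sqrt (p n)) / (sqrt (fact n) * sqrt (fact n))"
      unfolding a_def by (simp add: field_simps)
    also have "\<dots> = p n / fact n"
      using e2 p_nonneg[OF that] by simp
    finally show ?thesis by simp
  qed
  have pair: "(\<integral>\<omega>. fK K (X i \<omega>) * fK K (X j \<omega>) \<partial>M) = (\<Sum>n=1..K. p n * R i j ^ n)"
    if ij: "i \<in> {1..d}" "j \<in> {1..d}" for i j K
  proof -
    note hc = hermite_corr[OF gauss ij R_diag[OF ij(1)] R_diag[OF ij(2)] R_sym[OF ij(2) ij(1)] nnq[OF ij]]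
    have "(\<integral>\<omega>. fK K (X i \<omega>) * fK K (X j \<omega>) \<partial>M)
        = (\<integral>\<omega>. (\<Sum>n=1..K. \<Sum>m=1..K. a n * a m * (poly (Hv 1 n) (X i \<omega>) * poly (Hv 1 m) (X j \<omega>))) \<partial>M)"
      unfolding fK_sum sum_product by (simp add: mult_ac)
    also have "\<dots> = (\<Sum>n=1..K. \<Sum>m=1..K. a n * a m * (\<integral>\<omega>. poly (Hv 1 n) (X i \<omega>) * poly (Hv 1 m) (X j \<omega>) \<partial>M))"
      using hc(2) by (simp add: Bochner_Integration.integral_sum Bochner_Integration.integrable_sum)
    also have "\<dots> = (\<Sum>n=1..K. \<Sum>m=1..K. if m = n then a n * a n * (fact n * R i j ^ n) else 0)"
      unfolding hc(1) by (intro sum.cong refl) auto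
    also have "\<dots> = (\<Sum>n=1..K. a n * a n * (fact n * R i j ^ n))"
      by (intro sum.cong refl) simp
    also have "\<dots> = (\<Sum>n=1..K. p n * R i j ^ n)"
      by (intro sum.cong refl) (use aa in \<open>simp add: mult.assoc[symmetric]\<close>)
    finally show ?thesis .
  qed
  have mean0K: "(\<integral>\<omega>. fK K (X i \<omega>) \<partial>M) = 0" if i: "i \<in> {1..d}" for i K
  proof -
    note hc = hermite_corr[OF gauss i i R_diag[OF i] R_diag[OF i] refl nnq[OF i i]]
    have int1: "integrable M (\<lambda>\<omega>. poly (Hv 1 n) (X i \<omega>))" for n
      using hc(2)[of "Hv 1 n" 1] by simp
    have z: "(\<integral>\<omega>. poly (Hv 1 n) (X i \<omega>) \<partial>M) = 0" if "n \<ge> 1" for n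
      using hc(1)[of n 0] that by simp
    have "(\<integral>\<omega>. fK K (X i \<omega>) \<partial>M) = (\<Sum>n=1..K. a n * (\<integral>\<omega>. poly (Hv 1 n) (X i \<omega>) \<partial>M))"
      unfolding fK_sum by (simp add: Bochner_Integration.integral_sum int1)
    also have "\<dots> = 0"
      using z by (intro sum.neutral) auto
    finally show ?thesis .
  qed
  have psum: "(\<Sum>n=1..K. p n) \<le> 1" for K
  proof -
    have s1: "(\<Sum>n=1..K. h n) = (\<Sum>n<K. h (n + 1))" for h :: "nat \<Rightarrow> real"
      by (induction K) (simp_all add: atLeastAtMostSuc_conv)
    have "(\<Sum>n<K. p (n + 1)) \<le> (\<Sum>n. p (n + 1))"
      by (rule sum_le_suminf) (use p_sum p_nonneg in \<open>auto simp: sums_iff\<close>)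
    then show ?thesis using s1 p_sum by (simp add: sums_iff)
  qed
  have XiM: "(\<lambda>\<omega>. h (X i \<omega>)) \<in> borel_measurable M" if "i \<in> {1..d}" "h \<in> borel_measurable borel" for i h
    using Xm[OF that(1)] that(2) by measurable
  have int_f2: "integrable M (\<lambda>\<omega>. (f (X i \<omega>))\<^sup>2)" if i: "i \<in> {1..d}" for i
    using trJ[OF i, of "\<lambda>x. (f x)\<^sup>2"] if2 by simp
  have int_fK2: "integrable M (\<lambda>\<omega>. (fK K (X i \<omega>))\<^sup>2)" if i: "i \<in> {1..d}" for i K
    using trJ[OF i, of "\<lambda>x. (fK K x)\<^sup>2"] intK2 by simp
  have int_D: "integrable M (\<lambda>\<omega>. (f (X i \<omega>) - fK K (X i \<omega>))\<^sup>2)" if i: "i \<in> {1..d}" for i K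
    using trJ[OF i, of "\<lambda>x. (f x - fK K x)\<^sup>2"] iDK by simp
  have lim_D: "(\<lambda>K. \<integral>\<omega>. (f (X i \<omega>) - fK K (X i \<omega>))\<^sup>2 \<partial>M) \<longlonglongrightarrow> 0" if i: "i \<in> {1..d}" for i
  proof -
    have "(\<integral>\<omega>. (f (X i \<omega>) - fK K (X i \<omega>))\<^sup>2 \<partial>M) = eK K" for K
      unfolding eK_def using trI[OF i, of "\<lambda>x. (f x - fK K x)\<^sup>2"] by simp
    then show ?thesis using eK0 by simp
  qed
  have bnd: "(\<integral>\<omega>. (fK K (X i \<omega>))\<^sup>2 \<partial>M) \<le> 1" if i: "i \<in> {1..d}" for i K
    using pair[OF i i, of K] psum[of K] R_diag[OF i] by (simp add: power2_eq_square)
  have mean0: "(\<integral>\<omega>. f (X i \<omega>) \<partial>M) = 0" if i: "i \<in> {1..d}" for i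
  proof -
    have "(\<lambda>K. \<integral>\<omega>. 1 * fK K (X i \<omega>) \<partial>M) \<longlonglongrightarrow> (\<integral>\<omega>. 1 * f (X i \<omega>) \<partial>M)"
    proof (rule L2_lim)
      show "(\<lambda>\<omega>. f (X i \<omega>)) \<in> borel_measurable M" by (rule XiM[OF i]) simp
      show "(\<lambda>\<omega>. fK K (X i \<omega>)) \<in> borel_measurable M" for K by (rule XiM[OF i]) simp
    qed (use int_f2[OF i] int_fK2[OF i] int_D[OF i] lim_D[OF i] in simp_all)
    then have "(\<lambda>K. 0) \<longlonglongrightarrow> (\<integral>\<omega>. f (X i \<omega>) \<partial>M)" using mean0K[OF i] by simp
    then show ?thesis using LIMSEQ_unique[OF tendsto_const] by metis
  qed
  have g1: "g 1 = 1"
    using g_def[of 1] p_sum by (simp add: sums_iff)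
  show ?thesis
  proof (intro ballI conjI)
    fix i j assume i: "i \<in> {1..d}" and j: "j \<in> {1..d}"
    show "integrable M (\<lambda>\<omega>. (f (X i \<omega>))\<^sup>2)" by (rule int_f2[OF i])
    have EAB: "(\<integral>\<omega>. f (X i \<omega>) * f (X j \<omega>) \<partial>M) = g (R i j)" if ij: "i \<in> {1..d}" "j \<in> {1..d}" for i j
    proof -
      have l1: "(\<lambda>K. \<integral>\<omega>. fK K (X i \<omega>) * fK K (X j \<omega>) \<partial>M) \<longlonglongrightarrow> (\<integral>\<omega>. f (X i \<omega>) * f (X j \<omega>) \<partial>M)"
      proof (rule L2_lim)
        show "(\<lambda>\<omega>. f (X i \<omega>)) \<in> borel_measurable M" by (rule XiM[OF ij(1)]) simp
        show "(\<lambda>\<omega>. fK K (X i \<omega>)) \<in> borel_measurable M" for K by (rule XiM[OF ij(1)]) simp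
        show "(\<lambda>\<omega>. f (X j \<omega>)) \<in> borel_measurable M" by (rule XiM[OF ij(2)]) simp
        show "(\<lambda>\<omega>. fK K (X j \<omega>)) \<in> borel_measurable M" for K by (rule XiM[OF ij(2)]) simp
      qed (use int_f2 int_fK2 int_D lim_D bnd ij in simp_all)
      have rho: "R i j \<in> {-1..1}"
        using nnq[OF ij, of 1] nnq[OF ij, of "-1"] by simp
      have summ: "summable (\<lambda>n. p (n + 1))" using p_sum by (simp add: sums_iff)
      have "summable (\<lambda>n. p (n + 1) * R i j ^ (n + 1))"
      proof (rule summable_comparison_test'[OF summ])
        fix n :: nat
        have ab: "\<bar>R i j\<bar> \<le> 1" using rho by auto
        have "\<bar>R i j\<bar> ^ (n + 1) \<le> 1" by (rule power_le_one) (use ab in auto)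
        then have "\<bar>R i j ^ (n + 1)\<bar> \<le> 1" by (simp only: power_abs)
        then have le: "p (n + 1) * \<bar>R i j ^ (n + 1)\<bar> \<le> p (n + 1)"
          by (rule mult_left_le) (use p_nonneg[of "n + 1"] in simp)
        have "norm (p (n + 1) * R i j ^ (n + 1)) = p (n + 1) * \<bar>R i j ^ (n + 1)\<bar>"
          using p_nonneg[of "n + 1"] by (simp add: abs_mult)
        then show "norm (p (n + 1) * R i j ^ (n + 1)) \<le> p (n + 1)" using le by simp
      qed
      then have "(\<lambda>n. p (n + 1) * R i j ^ (n + 1)) sums g (R i j)"
        using g_def[OF rho] by (simp add: sums_iff)
      then have "(\<lambda>K. \<Sum>n<K. p (n + 1) * R i j ^ (n + 1)) \<longlonglongrightarrow> g (R i j)"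
        by (simp add: sums_def)
      moreover have "(\<Sum>n<K. p (n + 1) * R i j ^ (n + 1)) = (\<integral>\<omega>. fK K (X i \<omega>) * fK K (X j \<omega>) \<partial>M)" for K
      proof -
        have s1: "(\<Sum>n=1..K. h n) = (\<Sum>n<K. h (n + 1))" for h :: "nat \<Rightarrow> real"
          by (induction K) (simp_all add: atLeastAtMostSuc_conv)
        show ?thesis unfolding pair[OF ij] s1 ..
      qed
      ultimately have "(\<lambda>K. \<integral>\<omega>. fK K (X i \<omega>) * fK K (X j \<omega>) \<partial>M) \<longlonglongrightarrow> g (R i j)" by simp
      then show ?thesis using l1 LIMSEQ_unique by blast
    qed
    have cov: "covariance M (\<lambda>\<omega>. f (X i \<omega>)) (\<lambda>\<omega>. f (X j \<omega>)) = g (R i j)"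
      if ij: "i \<in> {1..d}" "j \<in> {1..d}" for i j
      unfolding covariance_def using mean0[OF ij(1)] mean0[OF ij(2)] EAB[OF ij] by simp
    show "covariance M (\<lambda>\<omega>. f (X i \<omega>)) (\<lambda>\<omega>. f (X j \<omega>)) = g (R i j)" by (rule cov[OF i j])
    show "correlation M (\<lambda>\<omega>. f (X i \<omega>)) (\<lambda>\<omega>. f (X j \<omega>)) = g (R i j)"
      unfolding correlation_def cov[OF i j] cov[OF i i] cov[OF j j] R_diag[OF i] R_diag[OF j] g1 by simp
  qed
qed


end
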